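(* Let $N\ge2$ and let $C\subset\mathbb{P}^N$ be an irreducible curve with $C\cap\Delta_{N-2}=\emptyset$. Then every coordinate point $p$ of $\mathbb{P}^N$ (e.g. $p=(1:0:\cdots:0)$) satisfies $\operatorname{Hrk}_C(p)=N$.
   Context: Hadamard product: $(p_0:\cdots:p_N)\star(q_0:\cdots:q_N)=(p_0q_0:\cdots:p_Nq_N)$, defined when not all $p_iq_i$ vanish. $\operatorname{Hrk}_C(q)=\min\{m\mid q=p_1\star\cdots\star p_m,\ p_i\in C\}$ ($\infty$ if none). $\Delta_{N-2}\subset\mathbb{P}^N$ is the set of points with at least two coordinates equal to zero. *)

theory Defs
  imports Complex_Main "HOL-Library.Extended_Nat"
begin

text \<open>Points of P^N over the complex numbers are represented by their homogeneous
coordinate vectors: functions x :: nat => complex with x i = 0 for i > N and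
some coordinate x i, i <= N, nonzero.\<close>

definition Pvec :: "nat \<Rightarrow> (nat \<Rightarrow> complex) set" where
  "Pvec N = {x. (\<forall>i>N. x i = 0) \<and> (\<exists>i\<le>N. x i \<noteq> 0)}"

definition proj_eq :: "(nat \<Rightarrow> complex) \<Rightarrow> (nat \<Rightarrow> complex) \<Rightarrow> bool" where
  "proj_eq x y \<longleftrightarrow> (\<exists>c. c \<noteq> 0 \<and> x = (\<lambda>i. c * y i))"

text \<open>Homogeneous polynomials of degree d in x_0..x_N: finitely supported coefficient
functions on exponent vectors alpha with alpha i = 0 for i > N and total degree d.\<close>

definition is_hpoly :: "nat \<Rightarrow> nat \<Rightarrow> ((nat \<Rightarrow> nat) \<Rightarrow> complex) \<Rightarrow> bool" where
  "is_hpoly N d f \<longleftrightarrow> finite {a. f a \<noteq> 0} \<and>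
     (\<forall>a. f a \<noteq> 0 \<longrightarrow> (\<forall>i>N. a i = 0) \<and> (\<Sum>i\<le>N. a i) = d)"

definition peval :: "nat \<Rightarrow> ((nat \<Rightarrow> nat) \<Rightarrow> complex) \<Rightarrow> (nat \<Rightarrow> complex) \<Rightarrow> complex" where
  "peval N f x = (\<Sum>a\<in>{a. f a \<noteq> 0}. f a * (\<Prod>i\<le>N. x i ^ a i))"

text \<open>Zariski closed subsets of P^N (as cones of representatives).\<close>

definition zclosed :: "nat \<Rightarrow> (nat \<Rightarrow> complex) set \<Rightarrow> bool" where
  "zclosed N S \<longleftrightarrow> (\<exists>F. (\<forall>(d, f)\<in>F. is_hpoly N d f) \<and>
      S = {x \<in> Pvec N. \<forall>(d, f)\<in>F. peval N f x = 0})"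

definition zirred :: "nat \<Rightarrow> (nat \<Rightarrow> complex) set \<Rightarrow> bool" where
  "zirred N S \<longleftrightarrow> zclosed N S \<and> S \<noteq> {} \<and>
     (\<forall>A B. zclosed N A \<and> zclosed N B \<and> S = A \<union> B \<longrightarrow> S = A \<or> S = B)"

text \<open>An irreducible curve: an irreducible projective variety of (Krull) dimension 1,
i.e. the longest chain of irreducible closed subsets ending in C has length exactly 1.\<close>

definition irred_curve :: "nat \<Rightarrow> (nat \<Rightarrow> complex) set \<Rightarrow> bool" where
  "irred_curve N C \<longleftrightarrow> zirred N C \<and>
     (\<exists>Z0. zirred N Z0 \<and> Z0 \<subset> C) \<and>
     \<not> (\<exists>Z0 Z1. zirred N Z0 \<and> zirred N Z1 \<and> Z0 \<subset> Z1 \<and> Z1 \<subset> C)"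

definition Delta :: "nat \<Rightarrow> (nat \<Rightarrow> complex) set" where
  "Delta N = {x \<in> Pvec N. \<exists>i j. i \<le> N \<and> j \<le> N \<and> i \<noteq> j \<and> x i = 0 \<and> x j = 0}"

definition hprod_list :: "(nat \<Rightarrow> complex) list \<Rightarrow> nat \<Rightarrow> complex" where
  "hprod_list ps = (\<lambda>i. \<Prod>p\<leftarrow>ps. p i)"

definition hrep :: "nat \<Rightarrow> (nat \<Rightarrow> complex) set \<Rightarrow> (nat \<Rightarrow> complex) \<Rightarrow> nat \<Rightarrow> bool" where
  "hrep N C q m \<longleftrightarrow> m \<ge> 1 \<and> (\<exists>ps. length ps = m \<and> set ps \<subseteq> C \<and>
      hprod_list ps \<in> Pvec N \<and> proj_eq q (hprod_list ps))"

definition Hrk :: "nat \<Rightarrow> (nat \<Rightarrow> complex) set \<Rightarrow> (nat \<Rightarrow> complex) \<Rightarrow> enat" where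
  "Hrk N C q = (if \<exists>m. hrep N C q m then enat (LEAST m. hrep N C q m) else \<infinity>)"

definition coord_point :: "nat \<Rightarrow> nat \<Rightarrow> complex" where
  "coord_point k = (\<lambda>i. if i = k then 1 else 0)"

end

theory Submission
  imports Defs "Subresultants.Subresultant_Gcd" "HOL-Computational_Algebra.Fundamental_Theorem_Algebra" "HOL-Computational_Algebra.Field_as_Ring"
begin



definition mev :: "nat \<Rightarrow> (nat \<Rightarrow> nat) \<Rightarrow> (nat \<Rightarrow> complex) \<Rightarrow> complex" where
  "mev N a x = (\<Prod>i\<le>N. x i ^ a i)"

lemma peval_mev: "peval N f x = (\<Sum>a\<in>{a. f a \<noteq> 0}. f a * mev N a x)"
  by (simp add: peval_def mev_def)

lemma peval_superset:
  assumes "finite T" "{a. f a \<noteq> 0} \<subseteq> T"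
  shows "peval N f x = (\<Sum>a\<in>T. f a * mev N a x)"
  unfolding peval_mev using assms by (intro sum.mono_neutral_left) auto

definition pfun :: "nat \<Rightarrow> ((nat \<Rightarrow> complex) \<Rightarrow> complex) \<Rightarrow> bool" where
  "pfun N P \<longleftrightarrow> (\<exists>f. finite {a. f a \<noteq> 0} \<and> (\<forall>a. f a \<noteq> 0 \<longrightarrow> (\<forall>i>N. a i = 0)) \<and> P = peval N f)"

lemma pfun_const: "pfun N (\<lambda>x. c)"
proof -
  let ?f = "\<lambda>a::nat\<Rightarrow>nat. if a = (\<lambda>_. 0) then c else 0"
  have "peval N ?f x = c" for x
    by (subst peval_superset[of "{\<lambda>_. 0}"]) (auto simp: mev_def)
  then show ?thesis unfolding pfun_def
    by (intro exI[of _ ?f]) (auto intro: finite_subset[of _ "{\<lambda>_. 0}"])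
qed

lemma pfun_var: assumes "i \<le> N" shows "pfun N (\<lambda>x. x i)"
proof -
  define e where "e = (\<lambda>k::nat. if k = i then 1 else (0::nat))"
  let ?f = "\<lambda>a. if a = e then (1::complex) else 0"
  have "peval N ?f x = x i" for x
  proof -
    have "peval N ?f x = mev N e x"
      by (subst peval_superset[of "{e}"]) auto
    also have "\<dots> = (\<Prod>k\<le>N. if k = i then x k else 1)"
      unfolding mev_def e_def by (intro prod.cong) auto
    also have "\<dots> = x i" using assms by (subst prod.delta) auto
    finally show ?thesis .
  qed
  then show ?thesis unfolding pfun_def using assms
    by (intro exI[of _ ?f]) (auto simp: e_def intro: finite_subset[of _ "{e}"])
qed

lemma pfun_add:
  assumes "pfun N P" "pfun N Q" shows "pfun N (\<lambda>x. P x + Q x)"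
proof -
  obtain f where f: "finite {a. f a \<noteq> 0}" "\<forall>a. f a \<noteq> 0 \<longrightarrow> (\<forall>i>N. a i = 0)" "P = peval N f"
    using assms(1) unfolding pfun_def by blast
  obtain g where g: "finite {a. g a \<noteq> 0}" "\<forall>a. g a \<noteq> 0 \<longrightarrow> (\<forall>i>N. a i = 0)" "Q = peval N g"
    using assms(2) unfolding pfun_def by blast
  let ?T = "{a. f a \<noteq> 0} \<union> {a. g a \<noteq> 0}"
  let ?h = "\<lambda>a. f a + g a"
  have sub: "{a. ?h a \<noteq> 0} \<subseteq> ?T" by auto
  have "peval N ?h x = P x + Q x" for x
    using f g sub
    by (simp add: peval_superset[of ?T] sum.distrib distrib_right)
  moreover have "finite {a. ?h a \<noteq> 0}" using f g sub finite_subset by blast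
  moreover have "\<forall>a. ?h a \<noteq> 0 \<longrightarrow> (\<forall>i>N. a i = 0)"
  proof (intro allI impI)
    fix a i assume "?h a \<noteq> 0" "N < i"
    then have "f a \<noteq> 0 \<or> g a \<noteq> 0" by auto
    then show "a i = 0" using f g \<open>N < i\<close> by blast
  qed
  ultimately show ?thesis unfolding pfun_def by (intro exI[of _ ?h]) auto
qed

definition addv :: "(nat \<Rightarrow> nat) \<Rightarrow> (nat \<Rightarrow> nat) \<Rightarrow> nat \<Rightarrow> nat" where
  "addv a b = (\<lambda>i. a i + b i)"

lemma mev_addv: "mev N (addv a b) x = mev N a x * mev N b x"
  unfolding mev_def addv_def by (simp add: power_add prod.distrib)

lemma pfun_mult:
  assumes "pfun N P" "pfun N Q" shows "pfun N (\<lambda>x. P x * Q x)"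
proof -
  obtain f where f: "finite {a. f a \<noteq> 0}" "\<forall>a. f a \<noteq> 0 \<longrightarrow> (\<forall>i>N. a i = 0)" "P = peval N f"
    using assms(1) unfolding pfun_def by blast
  obtain g where g: "finite {a. g a \<noteq> 0}" "\<forall>a. g a \<noteq> 0 \<longrightarrow> (\<forall>i>N. a i = 0)" "Q = peval N g"
    using assms(2) unfolding pfun_def by blast
  define SS where "SS = {a. f a \<noteq> 0} \<times> {a. g a \<noteq> 0}"
  have finSS: "finite SS" using f g by (simp add: SS_def)
  define ad where "ad = (\<lambda>p. addv (fst p) (snd p))"
  define h where "h = (\<lambda>c. \<Sum>p\<in>{p\<in>SS. ad p = c}. f (fst p) * g (snd p))"
  define T where "T = ad ` SS"
  have finT: "finite T" using finSS by (simp add: T_def)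
  have sub: "{c. h c \<noteq> 0} \<subseteq> T"
  proof
    fix c assume "c \<in> {c. h c \<noteq> 0}"
    then have "{p\<in>SS. ad p = c} \<noteq> {}" unfolding h_def by force
    then show "c \<in> T" unfolding T_def by blast
  qed
  have "P x * Q x = peval N h x" for x
  proof -
    have "P x * Q x = (\<Sum>a\<in>{a. f a \<noteq> 0}. f a * mev N a x) * (\<Sum>b\<in>{a. g a \<noteq> 0}. g b * mev N b x)"
      using f g by (simp add: peval_mev)
    also have "\<dots> = (\<Sum>p\<in>SS. f (fst p) * g (snd p) * mev N (ad p) x)"
      unfolding sum_product SS_def sum.cartesian_product ad_def mev_addv
      by (intro sum.cong) (auto simp: algebra_simps)
    also have "\<dots> = (\<Sum>c\<in>T. \<Sum>p\<in>{p\<in>SS. ad p = c}. f (fst p) * g (snd p) * mev N (ad p) x)"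
      unfolding T_def by (rule sum.image_gen[OF finSS])
    also have "\<dots> = (\<Sum>c\<in>T. h c * mev N c x)"
      unfolding h_def sum_distrib_right by (intro sum.cong refl) auto
    also have "\<dots> = peval N h x" using peval_superset[OF finT sub] by simp
    finally show ?thesis .
  qed
  moreover have "finite {a. h a \<noteq> 0}" using sub finT finite_subset by blast
  moreover have "\<forall>c. h c \<noteq> 0 \<longrightarrow> (\<forall>i>N. c i = 0)"
  proof (intro allI impI)
    fix c i assume "h c \<noteq> 0" "N < i"
    then have "c \<in> T" using sub by blast
    then obtain p where "p \<in> SS" "c = ad p" unfolding T_def by blast
    then show "c i = 0" using f g \<open>N < i\<close> by (auto simp: SS_def ad_def addv_def)
  qed
  ultimately show ?thesis unfolding pfun_def by (intro exI[of _ h]) auto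
qed

lemma pfun_sum: "finite S \<Longrightarrow> (\<And>s. s \<in> S \<Longrightarrow> pfun N (P s)) \<Longrightarrow> pfun N (\<lambda>x. \<Sum>s\<in>S. P s x)"
  by (induction S rule: finite_induct) (auto intro: pfun_add pfun_const)

lemma pfun_prod: "finite S \<Longrightarrow> (\<And>s. s \<in> S \<Longrightarrow> pfun N (P s)) \<Longrightarrow> pfun N (\<lambda>x. \<Prod>s\<in>S. P s x)"
  by (induction S rule: finite_induct) (auto intro: pfun_mult pfun_const)

lemma pfun_power: "pfun N P \<Longrightarrow> pfun N (\<lambda>x. P x ^ n)"
  by (induction n) (auto intro: pfun_mult pfun_const)

lemma pfun_hpoly: "is_hpoly N d f \<Longrightarrow> pfun N (peval N f)"
  unfolding pfun_def is_hpoly_def by blast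

lemma pfun_diff: "pfun N P \<Longrightarrow> pfun N Q \<Longrightarrow> pfun N (\<lambda>x. P x - Q x)"
proof -
  assume "pfun N P" "pfun N Q"
  then have "pfun N (\<lambda>x. P x + (-1) * Q x)" by (intro pfun_add pfun_mult pfun_const)
  then show ?thesis by simp
qed

definition degv :: "nat \<Rightarrow> (nat \<Rightarrow> nat) \<Rightarrow> nat" where "degv N a = (\<Sum>i\<le>N. a i)"

lemma mev_scale: "mev N a (\<lambda>i. c * x i) = c ^ degv N a * mev N a x"
  unfolding mev_def degv_def by (simp add: power_mult_distrib prod.distrib power_sum)

lemma peval_scale: "is_hpoly N d f \<Longrightarrow> peval N f (\<lambda>i. c * x i) = c ^ d * peval N f x"
  unfolding peval_mev mev_scale is_hpoly_def degv_def sum_distrib_left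
  by (intro sum.cong) auto

lemma pfun_decomp:
  assumes "pfun N P"
  shows "\<exists>g D. finite D \<and> (\<forall>d. is_hpoly N d (g d)) \<and> (\<forall>d. d \<notin> D \<longrightarrow> g d = (\<lambda>_. 0)) \<and>
     (\<forall>x c. P (\<lambda>i. c * x i) = (\<Sum>d\<in>D. c ^ d * peval N (g d) x))"
proof -
  obtain f where f: "finite {a. f a \<noteq> 0}" "\<forall>a. f a \<noteq> 0 \<longrightarrow> (\<forall>i>N. a i = 0)" "P = peval N f"
    using assms unfolding pfun_def by blast
  define S where "S = {a. f a \<noteq> 0}"
  define g where "g = (\<lambda>d a. if degv N a = d then f a else 0)"
  define D where "D = degv N ` S"
  have "finite D" using f by (simp add: D_def S_def)
  moreover have "\<forall>d. is_hpoly N d (g d)"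
    unfolding is_hpoly_def g_def degv_def using f
    by (auto intro: finite_subset[OF _ f(1)])
  moreover have "\<forall>d. d \<notin> D \<longrightarrow> g d = (\<lambda>_. 0)"
    unfolding D_def S_def g_def by (auto simp: fun_eq_iff)
  moreover have "P (\<lambda>i. c * x i) = (\<Sum>d\<in>D. c ^ d * peval N (g d) x)" for x c
  proof -
    have gd: "peval N (g d) x = (\<Sum>a\<in>{a\<in>S. degv N a = d}. f a * mev N a x)" for d
      using f(1) unfolding S_def
      by (subst peval_superset[of "{a\<in>S. degv N a = d}"]) (auto simp: S_def g_def intro!: sum.cong)
    have "P (\<lambda>i. c * x i) = (\<Sum>a\<in>S. f a * (c ^ degv N a * mev N a x))"
      unfolding f(3) peval_mev mev_scale S_def ..
    also have "\<dots> = (\<Sum>d\<in>D. \<Sum>a\<in>{a\<in>S. degv N a = d}. f a * (c ^ degv N a * mev N a x))"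
      unfolding D_def using f(1) S_def by (intro sum.image_gen) auto
    also have "\<dots> = (\<Sum>d\<in>D. c ^ d * peval N (g d) x)"
      unfolding gd sum_distrib_left by (intro sum.cong refl) (auto simp: algebra_simps)
    finally show ?thesis .
  qed
  ultimately show ?thesis by blast
qed

lemma poly_vanish_coeffs:
  fixes a :: "nat \<Rightarrow> complex"
  assumes "finite D" "\<And>c. c \<noteq> 0 \<Longrightarrow> (\<Sum>d\<in>D. c ^ d * a d) = 0" "d \<in> D"
  shows "a d = 0"
proof -
  define Q where "Q = (\<Sum>d\<in>D. monom (a d) d)"
  have pq: "poly Q c = (\<Sum>d\<in>D. c ^ d * a d)" for c
    unfolding Q_def by (simp add: poly_sum poly_monom mult.commute)
  have "Q = 0"
  proof (rule ccontr)
    assume "Q \<noteq> 0"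
    then have "finite {c. poly Q c = 0}" by (rule poly_roots_finite)
    moreover have "- {0} \<subseteq> {c. poly Q c = 0}" using assms(2) pq by auto
    moreover have "infinite (- {0::complex})"
    proof
      assume "finite (- {0::complex})"
      then have "finite (insert 0 (- {0::complex}))" by simp
      moreover have "insert 0 (- {0::complex}) = UNIV" by auto
      ultimately show False using infinite_UNIV_char_0[where 'a=complex] by simp
    qed
    ultimately show False using finite_subset by blast
  qed
  then have "coeff Q d = 0" by simp
  moreover have "coeff Q d = a d"
    unfolding Q_def coeff_sum coeff_monom using assms(1,3) by (simp add: sum.delta)
  ultimately show ?thesis by simp
qed

definition hdec :: "nat \<Rightarrow> ((nat \<Rightarrow> complex) \<Rightarrow> complex) \<Rightarrow> (nat \<Rightarrow> (nat \<Rightarrow> nat) \<Rightarrow> complex) \<Rightarrow> nat set \<Rightarrow> bool" where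
  "hdec N P g D \<longleftrightarrow> finite D \<and> (\<forall>d. is_hpoly N d (g d)) \<and> (\<forall>d. d \<notin> D \<longrightarrow> g d = (\<lambda>_. 0)) \<and>
     (\<forall>x c. P (\<lambda>i. c * x i) = (\<Sum>d\<in>D. c ^ d * peval N (g d) x))"

lemma zclosed_from_pfuns:
  assumes sub: "S \<subseteq> Pvec N"
    and cone: "\<And>x c. x \<in> S \<Longrightarrow> c \<noteq> 0 \<Longrightarrow> (\<lambda>i. c * x i) \<in> S"
    and pf: "\<And>P. P \<in> Ps \<Longrightarrow> pfun N P"
    and eq: "\<And>x. x \<in> Pvec N \<Longrightarrow> x \<in> S \<longleftrightarrow> (\<forall>P\<in>Ps. P x = 0)"
  shows "zclosed N S"
proof -
  define F where "F = (\<lambda>(d, g, P, D). (d, g d)) ` {(d, g, P, D). P \<in> Ps \<and> hdec N P g D}"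
  have Fh: "\<forall>(d, f)\<in>F. is_hpoly N d f" unfolding F_def hdec_def by auto
  have "S = {x \<in> Pvec N. \<forall>(d, f)\<in>F. peval N f x = 0}"
  proof (intro equalityI subsetI)
    fix x assume xS: "x \<in> S"
    have "peval N f x = 0" if dfF: "(d, f) \<in> F" for d f
    proof -
      obtain t where t: "t \<in> {(d, g, P, D). P \<in> Ps \<and> hdec N P g D}" "(d, f) = (\<lambda>(d, g, P, D). (d, g d)) t"
        using dfF unfolding F_def by (rule imageE)
      obtain d' g P D where tt: "t = (d', g, P, D)" by (cases t)
      have gP0: "d = d'" "f = g d'" "P \<in> Ps" "hdec N P g D" using t unfolding tt by auto
      have gP: "f = g d" "P \<in> Ps" "finite D" "\<forall>d. d \<notin> D \<longrightarrow> g d = (\<lambda>_. 0)"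
        "\<forall>x c. P (\<lambda>i. c * x i) = (\<Sum>d\<in>D. c ^ d * peval N (g d) x)"
        using gP0 unfolding hdec_def by auto
      show ?thesis
      proof (cases "d \<in> D")
        case True
        have "(\<Sum>d\<in>D. c ^ d * peval N (g d) x) = 0" if "c \<noteq> 0" for c
        proof -
          have "(\<lambda>i. c * x i) \<in> S" using cone xS that by blast
          then have "P (\<lambda>i. c * x i) = 0" using eq sub gP(2) by blast
          then show ?thesis using gP(5) by metis
        qed
        from poly_vanish_coeffs[OF gP(3) this True] show ?thesis using gP(1) by simp
      next
        case False
        then have "f = (\<lambda>_. 0)" using gP(1,4) by simp
        then show ?thesis by (simp add: peval_def)
      qed
    qed
    then show "x \<in> {x \<in> Pvec N. \<forall>(d, f)\<in>F. peval N f x = 0}" using xS sub by blast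
  next
    fix x assume x: "x \<in> {x \<in> Pvec N. \<forall>(d, f)\<in>F. peval N f x = 0}"
    have "P x = 0" if PP: "P \<in> Ps" for P
    proof -
      obtain g D where gD: "hdec N P g D"
        using pfun_decomp[OF pf[OF PP]] unfolding hdec_def by blast
      have "(d, g d) \<in> F" for d unfolding F_def using PP gD
        by (intro image_eqI[of _ _ "(d, g, P, D)"]) auto
      then have "peval N (g d) x = 0" for d using x by blast
      moreover have "P (\<lambda>i. 1 * x i) = (\<Sum>d\<in>D. 1 ^ d * peval N (g d) x)"
        using gD unfolding hdec_def by blast
      ultimately have "P (\<lambda>i. 1 * x i) = 0" by simp
      then show ?thesis by simp
    qed
    then show "x \<in> S" using eq x by blast
  qed
  then show ?thesis unfolding zclosed_def using Fh by blast
qed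




lemma Pvec_scale: "x \<in> Pvec N \<Longrightarrow> c \<noteq> 0 \<Longrightarrow> (\<lambda>i. c * x i) \<in> Pvec N"
  unfolding Pvec_def by auto

lemma zclosed_sub: "zclosed N S \<Longrightarrow> S \<subseteq> Pvec N"
  unfolding zclosed_def by auto

lemma zclosed_cone:
  assumes "zclosed N S" "x \<in> S" "c \<noteq> 0" shows "(\<lambda>i. c * x i) \<in> S"
proof -
  obtain F where F: "\<forall>(d, f)\<in>F. is_hpoly N d f" "S = {x \<in> Pvec N. \<forall>(d, f)\<in>F. peval N f x = 0}"
    using assms(1) unfolding zclosed_def by blast
  have "peval N f (\<lambda>i. c * x i) = 0" if "(d, f) \<in> F" for d f
  proof -
    have "is_hpoly N d f" using F(1) that by blast
    moreover have "peval N f x = 0" using F(2) assms(2) that by blast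
    ultimately show ?thesis by (simp add: peval_scale)
  qed
  moreover have "(\<lambda>i. c * x i) \<in> Pvec N" using Pvec_scale assms F(2) by blast
  ultimately show ?thesis using F(2) by blast
qed

lemma zclosed_pfuns:
  assumes "zclosed N S"
  shows "\<exists>Ps. (\<forall>P\<in>Ps. pfun N P) \<and> (\<forall>x. x \<in> S \<longleftrightarrow> x \<in> Pvec N \<and> (\<forall>P\<in>Ps. P x = 0))"
proof -
  obtain F where F: "\<forall>(d, f)\<in>F. is_hpoly N d f" "S = {x \<in> Pvec N. \<forall>(d, f)\<in>F. peval N f x = 0}"
    using assms(1) unfolding zclosed_def by blast
  define Ps where "Ps = (\<lambda>(d, f). peval N f) ` F"
  have "\<forall>P\<in>Ps. pfun N P" unfolding Ps_def using F(1) pfun_hpoly by fastforce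
  moreover have "\<forall>x. x \<in> S \<longleftrightarrow> x \<in> Pvec N \<and> (\<forall>P\<in>Ps. P x = 0)"
    unfolding Ps_def F(2) by auto
  ultimately show ?thesis by blast
qed

definition upoly :: "nat \<Rightarrow> nat \<Rightarrow> ((nat \<Rightarrow> nat) \<Rightarrow> complex) \<Rightarrow> (nat \<Rightarrow> complex) \<Rightarrow> complex poly" where
  "upoly N l f q = (\<Sum>a\<in>{a. f a \<noteq> 0}. monom (f a * (\<Prod>i\<in>{..N}-{l}. q i ^ a i)) (a l))"

lemma poly_upoly:
  assumes "l \<le> N" shows "poly (upoly N l f q) s = peval N f (q(l:=s))"
proof -
  have "(\<Prod>i\<le>N. (q(l:=s)) i ^ a i) = s ^ a l * (\<Prod>i\<in>{..N}-{l}. q i ^ a i)" for a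
  proof -
    have "(\<Prod>i\<le>N. (q(l:=s)) i ^ a i) = (q(l:=s)) l ^ a l * (\<Prod>i\<in>{..N}-{l}. (q(l:=s)) i ^ a i)"
      using assms by (subst prod.remove[of _ l]) auto
    also have "(\<Prod>i\<in>{..N}-{l}. (q(l:=s)) i ^ a i) = (\<Prod>i\<in>{..N}-{l}. q i ^ a i)"
      by (intro prod.cong) auto
    finally show ?thesis by simp
  qed
  then show ?thesis unfolding upoly_def peval_def poly_sum poly_monom
    by (intro sum.cong) (auto simp: algebra_simps)
qed

lemma coeff_upoly:
  "coeff (upoly N l f q) k = (\<Sum>a\<in>{a. f a \<noteq> 0}. (if a l = k then f a else 0) * (\<Prod>i\<in>{..N}-{l}. q i ^ a i))"
  unfolding upoly_def coeff_sum coeff_monom by (intro sum.cong) auto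

lemma pfun_coeff_upoly:
  assumes "finite {a. f a \<noteq> 0}"
  shows "pfun N (\<lambda>q. coeff (upoly N l f q) k)"
  unfolding coeff_upoly using assms
  by (intro pfun_sum pfun_mult pfun_const pfun_prod pfun_power pfun_var) auto

lemma degree_upoly:
  assumes "is_hpoly N d f" "l \<le> N" shows "degree (upoly N l f q) \<le> d"
  unfolding upoly_def
proof (rule degree_sum_le)
  show "finite {a. f a \<noteq> 0}" using assms unfolding is_hpoly_def by blast
next
  fix a assume "a \<in> {a. f a \<noteq> 0}"
  then have "(\<Sum>i\<le>N. a i) = d" using assms unfolding is_hpoly_def by blast
  moreover have "a l \<le> (\<Sum>i\<le>N. a i)" using assms(2) by (intro member_le_sum) auto
  ultimately show "degree (monom (f a * (\<Prod>i\<in>{..N}-{l}. q i ^ a i)) (a l)) \<le> d"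
    by (meson degree_monom_le le_trans)
qed

lemma hp_top:
  assumes "is_hpoly N d f" "f a \<noteq> 0" "l \<le> N"
  shows "(a l = d \<longleftrightarrow> a = (\<lambda>i. if i = l then d else 0))"
    "(a = (\<lambda>i. if i = l then d else 0)) \<longleftrightarrow> (\<forall>i\<in>{..N}-{l}. a i = 0)"
proof -
  have sd: "(\<Sum>i\<le>N. a i) = d" and hi: "\<forall>i>N. a i = 0" using assms unfolding is_hpoly_def by auto
  have split: "(\<Sum>i\<le>N. a i) = a l + (\<Sum>i\<in>{..N}-{l}. a i)"
    using assms(3) by (subst sum.remove[of _ l]) auto
  have rest: "(\<Sum>i\<in>{..N}-{l}. a i) = 0 \<longleftrightarrow> (\<forall>i\<in>{..N}-{l}. a i = 0)" by simp
  have A: "(\<forall>i\<in>{..N}-{l}. a i = 0) \<longleftrightarrow> a = (\<lambda>i. if i = l then d else 0)"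
  proof
    assume H: "\<forall>i\<in>{..N}-{l}. a i = 0"
    then have "a l = d" using sd split rest by simp
    then show "a = (\<lambda>i. if i = l then d else 0)"
    proof (intro ext)
      fix i show "a i = (if i = l then d else 0)"
        using H hi \<open>a l = d\<close> by (cases "i \<le> N") auto
    qed
  next
    assume "a = (\<lambda>i. if i = l then d else 0)" then show "\<forall>i\<in>{..N}-{l}. a i = 0" by auto
  qed
  show "(a l = d \<longleftrightarrow> a = (\<lambda>i. if i = l then d else 0))"
    using A sd split rest by auto
  show "(a = (\<lambda>i. if i = l then d else 0)) \<longleftrightarrow> (\<forall>i\<in>{..N}-{l}. a i = 0)" using A by simp
qed

lemma coeff_upoly_top:
  assumes "is_hpoly N d f" "l \<le> N"
  shows "coeff (upoly N l f q) d = peval N f (coord_point l)"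
proof -
  define a0 where "a0 = (\<lambda>i::nat. if i = l then d else (0::nat))"
  define S where "S = {a. f a \<noteq> 0}"
  have fin: "finite S" using assms unfolding is_hpoly_def S_def by blast
  have "coeff (upoly N l f q) d = (\<Sum>a\<in>S. if a = a0 then f a else 0)"
    unfolding coeff_upoly S_def
  proof (intro sum.cong refl)
    fix a assume a: "a \<in> {a. f a \<noteq> 0}"
    show "(if a l = d then f a else 0) * (\<Prod>i\<in>{..N}-{l}. q i ^ a i) = (if a = a0 then f a else 0)"
    proof (cases "a = a0")
      case True
      then have "\<forall>i\<in>{..N}-{l}. a i = 0" unfolding a0_def by auto
      then show ?thesis using True by (simp add: a0_def)
    next
      case False
      then show ?thesis using hp_top(1)[OF assms(1) _ assms(2), of a] a unfolding a0_def by auto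
    qed
  qed
  also have "\<dots> = f a0" using fin by (simp add: sum.delta' S_def)
  also have "f a0 = (\<Sum>a\<in>S. f a * mev N a (coord_point l))"
  proof -
    have "(\<Sum>a\<in>S. f a * mev N a (coord_point l)) = (\<Sum>a\<in>S. if a = a0 then f a else 0)"
    proof (intro sum.cong refl)
      fix a assume a: "a \<in> S"
      have "mev N a (coord_point l) = (\<Prod>i\<le>N. (if i = l then 1 else 0) ^ a i)"
        unfolding mev_def coord_point_def by simp
      have "(\<Prod>i\<le>N. (if i = l then 1 else 0 :: complex) ^ a i) = (\<Prod>i\<in>{..N}-{l}. (0::complex) ^ a i)"
        using assms(2) by (subst prod.remove[of _ l]) (auto intro!: prod.cong)
      also have "\<dots> = (if \<forall>i\<in>{..N}-{l}. a i = 0 then 1 else 0)"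
        by (auto simp: power_0_left prod_zero_iff)
      finally have "mev N a (coord_point l) = (if a = a0 then 1 else 0)"
        using hp_top(2)[OF assms(1) _ assms(2), of a] a
        unfolding mev_def coord_point_def a0_def S_def by simp
      then show "f a * mev N a (coord_point l) = (if a = a0 then f a else 0)" by simp
    qed
    then show ?thesis using fin by (simp add: sum.delta' S_def)
  qed
  also have "\<dots> = peval N f (coord_point l)" unfolding peval_mev S_def ..
  finally show ?thesis .
qed




lemma resultant_root_iff:
  fixes p h :: "complex poly"
  assumes "p \<noteq> 0"
  shows "resultant p h = 0 \<longleftrightarrow> (\<exists>s. poly p s = 0 \<and> poly h s = 0)"
proof
  assume "resultant p h = 0"
  then have "degree (gcd p h) \<noteq> 0" by (simp add: resultant_0_gcd)
  then have "\<not> constant (poly (gcd p h))" by (simp add: constant_degree)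
  then obtain s where s: "poly (gcd p h) s = 0" using fundamental_theorem_of_algebra by blast
  have "poly p s = 0" using s poly_eq_0_iff_dvd dvd_trans gcd_dvd1 by metis
  moreover have "poly h s = 0" using s poly_eq_0_iff_dvd dvd_trans gcd_dvd2 by metis
  ultimately show "\<exists>s. poly p s = 0 \<and> poly h s = 0" by blast
next
  assume "\<exists>s. poly p s = 0 \<and> poly h s = 0"
  then obtain s where "poly p s = 0" "poly h s = 0" by blast
  then have "[:-s, 1:] dvd gcd p h" by (simp add: poly_eq_0_iff_dvd)
  moreover have "gcd p h \<noteq> 0" using assms by simp
  ultimately have "degree [:-s, 1:] \<le> degree (gcd p h)" by (rule dvd_imp_degree_le)
  then have "degree (gcd p h) \<noteq> 0" by simp
  then show "resultant p h = 0" by (simp add: resultant_0_gcd)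
qed

lemma pfun_det:
  assumes "\<And>i j. i < n \<Longrightarrow> j < n \<Longrightarrow> pfun N (\<lambda>q. M q $$ (i, j))"
    and "\<And>q. M q \<in> carrier_mat n n"
  shows "pfun N (\<lambda>q. det (M q))"
proof -
  have "(\<lambda>q. det (M q)) = (\<lambda>q. \<Sum>p\<in>{p. p permutes {0..<n}}. of_int (sign p) * (\<Prod>i\<in>{0..<n}. M q $$ (i, p i)))"
  proof (rule ext)
    fix q
    have "dim_row (M q) = n" "dim_col (M q) = n" using assms(2)[of q] by auto
    then show "det (M q) = (\<Sum>p\<in>{p. p permutes {0..<n}}. of_int (sign p) * (\<Prod>i\<in>{0..<n}. M q $$ (i, p i)))"
      by (simp add: det_def)
  qed
  moreover have "pfun N (\<lambda>q. \<Sum>p\<in>{p. p permutes {0..<n}}. of_int (sign p) * (\<Prod>i\<in>{0..<n}. M q $$ (i, p i)))"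
  proof (intro pfun_sum pfun_mult pfun_const pfun_prod)
    show "finite {p. p permutes {0..<n}}" by (rule finite_permutations) simp
    show "finite {0..<n}" by simp
    fix p i assume "p \<in> {p. p permutes {0..<n}}" "i \<in> {0..<n}"
    then have "i < n" "p i < n" using permutes_in_image by fastforce+
    then show "pfun N (\<lambda>q. M q $$ (i, p i))" using assms(1) by blast
  qed
  ultimately show ?thesis by simp
qed

lemma pfun_if: "pfun N P \<Longrightarrow> pfun N Q \<Longrightarrow> pfun N (\<lambda>q. if c then P q else Q q)"
  by (cases c) auto

lemma pfun_sylv_entry:
  assumes "\<And>k. pfun N (\<lambda>q. coeff (A q) k)" "\<And>k. pfun N (\<lambda>q. coeff (B q) k)"
    and "i < m + n" "j < m + n"
  shows "pfun N (\<lambda>q. sylvester_mat_sub m n (A q) (B q) $$ (i, j))"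
proof -
  have "(\<lambda>q. sylvester_mat_sub m n (A q) (B q) $$ (i, j)) =
    (\<lambda>q. if i < n then if i \<le> j \<and> j - i \<le> m then coeff (A q) (m + i - j) else 0
          else if i - n \<le> j \<and> j \<le> i then coeff (B q) (i - j) else 0)"
    using assms(3,4) by (intro ext) (simp add: sylvester_mat_sub_index)
  moreover have "pfun N (\<lambda>q. if i < n then if i \<le> j \<and> j - i \<le> m then coeff (A q) (m + i - j) else 0
          else if i - n \<le> j \<and> j \<le> i then coeff (B q) (i - j) else 0)"
    by (intro pfun_if pfun_const assms(1,2))
  ultimately show ?thesis by simp
qed

lemma exists_not_in_finite: "finite (A :: complex set) \<Longrightarrow> \<exists>t. t \<notin> A"
  using infinite_UNIV_char_0[where 'a=complex] by (metis UNIV_I finite_subset subsetI)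

lemma proj_closed:
  assumes Y: "zclosed N Y" and l: "l \<le> N"
    and nz: "\<forall>x\<in>Y. \<exists>i\<le>N. i \<noteq> l \<and> x i \<noteq> 0"
  shows "zclosed N ((\<lambda>x. x(l:=0)) ` Y)"
proof -
  obtain F where F: "\<forall>(d, f)\<in>F. is_hpoly N d f" "Y = {x \<in> Pvec N. \<forall>(d, f)\<in>F. peval N f x = 0}"
    using Y unfolding zclosed_def by blast
  have el: "coord_point l \<in> Pvec N" using l unfolding Pvec_def coord_point_def
    by (auto intro!: exI[of _ l])
  have "coord_point l \<notin> Y"
  proof
    assume "coord_point l \<in> Y"
    then obtain i where "i \<le> N" "i \<noteq> l" "coord_point l i \<noteq> 0" using nz by blast
    then show False unfolding coord_point_def by simp
  qed
  then have "\<not> (\<forall>(d, f)\<in>F. peval N f (coord_point l) = 0)" using F(2) el by blast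
  then obtain d0 f0 where f0: "(d0, f0) \<in> F" "peval N f0 (coord_point l) \<noteq> 0"
    by blast
  have hf0: "is_hpoly N d0 f0" using F(1) f0(1) by blast
  define c0 where "c0 = peval N f0 (coord_point l)"
  have c0: "c0 \<noteq> 0" using f0 c0_def by simp
  define P0 where "P0 = (\<lambda>q. upoly N l f0 q)"
  have lcP0: "coeff (P0 q) d0 = c0" for q
    unfolding P0_def c0_def using coeff_upoly_top[OF hf0 l] .
  have degP0: "degree (P0 q) = d0" for q
  proof -
    have "degree (P0 q) \<le> d0" unfolding P0_def by (rule degree_upoly[OF hf0 l])
    moreover have "d0 \<le> degree (P0 q)" by (rule le_degree) (simp add: lcP0 c0)
    ultimately show ?thesis by simp
  qed
  have P0nz: "P0 q \<noteq> 0" for q using lcP0[of q] c0 by (metis coeff_0)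
  have pfP0: "pfun N (\<lambda>q. coeff (P0 q) k)" for k
    unfolding P0_def using hf0 by (intro pfun_coeff_upoly) (simp add: is_hpoly_def)
  define EE where "EE = (\<lambda>(n::nat) (G :: nat \<Rightarrow> nat \<times> ((nat \<Rightarrow> nat) \<Rightarrow> complex)). d0 + (\<Sum>k<n. fst (G k)) + 1)"
  define H where "H = (\<lambda>n G (U :: nat \<Rightarrow> complex) q. (\<Sum>k<n. smult (U k) (upoly N l (snd (G k)) q)) + monom 1 (EE n G - d0) * P0 q)"
  define R where "R = (\<lambda>n G U q. det (sylvester_mat_sub d0 (EE n G) (P0 q) (H n G U q)))"
  define valid where "valid = (\<lambda>(n::nat) (G :: nat \<Rightarrow> nat \<times> ((nat \<Rightarrow> nat) \<Rightarrow> complex)). \<forall>k<n. G k \<in> F)"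
  have hkF: "is_hpoly N (fst dg) (snd dg)" if "dg \<in> F" for dg using F(1) that by (cases dg) auto
  have degH: "degree (H n G U q) = EE n G" if v: "valid n G" for n G U q
  proof -
    have hk: "is_hpoly N (fst (G k)) (snd (G k))" if "k < n" for k
      using v that hkF unfolding valid_def by blast
    have fk: "fst (G k) < EE n G" if "k < n" for k
    proof -
      have "fst (G k) \<le> (\<Sum>k<n. fst (G k))" using that by (intro member_le_sum) auto
      then show ?thesis unfolding EE_def by simp
    qed
    have dk: "degree (smult (U k) (upoly N l (snd (G k)) q)) < EE n G" if "k < n" for k
      using degree_smult_le degree_upoly[OF hk[OF that] l] fk[OF that] le_less_trans le_trans by metis
    have dsum: "degree (\<Sum>k<n. smult (U k) (upoly N l (snd (G k)) q)) < EE n G"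
    proof -
      have "degree (\<Sum>k<n. smult (U k) (upoly N l (snd (G k)) q)) \<le> EE n G - 1"
        using dk by (intro degree_sum_le) force+
      moreover have "EE n G \<ge> 1" unfolding EE_def by simp
      ultimately show ?thesis by linarith
    qed
    have ge: "EE n G \<ge> d0" unfolding EE_def by simp
    have dm: "degree (monom (1::complex) (EE n G - d0) * P0 q) \<le> EE n G"
      using degree_mult_le[of "monom (1::complex) (EE n G - d0)" "P0 q"] degP0 ge
      by (simp add: degree_monom_eq)
    have "degree (H n G U q) \<le> EE n G" unfolding H_def
      using dsum dm by (intro degree_add_le) auto
    moreover have "coeff (H n G U q) (EE n G) = c0"
      unfolding H_def coeff_add coeff_monom_mult using coeff_eq_0[OF dsum] ge lcP0 by simp
    moreover have "EE n G \<le> degree (H n G U q)" by (rule le_degree) (simp add: calculation c0)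
    ultimately show ?thesis by simp
  qed
  have resR: "resultant (P0 q) (H n G U q) = R n G U q" if "valid n G" for n G U q
    unfolding resultant_def sylvester_mat_def R_def degP0 degH[OF that] ..
  have pfR: "pfun N (R n G U)" if v: "valid n G" for n G U
  proof -
    have fin: "finite {a. snd (G k) a \<noteq> 0}" if "k < n" for k
    proof -
      have "G k \<in> F" using v that unfolding valid_def by blast
      then have "is_hpoly N (fst (G k)) (snd (G k))" using hkF by blast
      then show ?thesis unfolding is_hpoly_def by blast
    qed
    have pfH: "pfun N (\<lambda>q. coeff (H n G U q) k)" for k
    proof -
      have "(\<lambda>q. coeff (H n G U q) k) = (\<lambda>q. (\<Sum>j<n. U j * coeff (upoly N l (snd (G j)) q) k) +
          (if EE n G - d0 \<le> k then 1 * coeff (P0 q) (k - (EE n G - d0)) else 0))"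
        unfolding H_def by (intro ext) (simp add: coeff_sum coeff_monom_mult)
      moreover have "pfun N (\<lambda>q. (\<Sum>j<n. U j * coeff (upoly N l (snd (G j)) q) k) +
          (if EE n G - d0 \<le> k then 1 * coeff (P0 q) (k - (EE n G - d0)) else 0))"
        by (intro pfun_add pfun_sum pfun_mult pfun_const pfun_coeff_upoly fin pfun_if pfP0) auto
      ultimately show ?thesis by simp
    qed
    show ?thesis unfolding R_def
      by (rule pfun_det[of "d0 + EE n G"]) (auto intro!: pfun_sylv_entry pfP0 pfH)
  qed
  have key: "(\<exists>s. q(l:=s) \<in> Y) \<longleftrightarrow> (\<forall>n G U. valid n G \<longrightarrow> R n G U q = 0)"
    if q: "q \<in> Pvec N" "q l = 0" for q
  proof
    assume "\<exists>s. q(l:=s) \<in> Y"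
    then obtain s where s: "q(l:=s) \<in> Y" by blast
    have van: "peval N g (q(l:=s)) = 0" if "(d, g) \<in> F" for d g using s F(2) that by blast
    show "\<forall>n G U. valid n G \<longrightarrow> R n G U q = 0"
    proof (intro allI impI)
      fix n G U assume v: "valid n G"
      have r0: "poly (P0 q) s = 0" unfolding P0_def poly_upoly[OF l] using van f0(1) by blast
      have "poly (H n G U q) s = 0"
      proof -
        have "poly (upoly N l (snd (G k)) q) s = 0" if "k < n" for k
          unfolding poly_upoly[OF l] using v that van unfolding valid_def by (metis prod.collapse)
        then show ?thesis unfolding H_def using r0 by (simp add: poly_sum)
      qed
      then have "resultant (P0 q) (H n G U q) = 0" using resultant_root_iff[OF P0nz] r0 by blast
      then show "R n G U q = 0" using resR[OF v] by simp
    qed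
  next
    assume all: "\<forall>n G U. valid n G \<longrightarrow> R n G U q = 0"
    show "\<exists>s. q(l:=s) \<in> Y"
    proof (rule ccontr)
      assume nY: "\<not> (\<exists>s. q(l:=s) \<in> Y)"
      have Pv: "q(l:=s) \<in> Pvec N" for s
      proof -
        obtain i where i: "i \<le> N" "q i \<noteq> 0" using q unfolding Pvec_def by blast
        then have "i \<noteq> l" using q(2) by auto
        then show ?thesis using q l i unfolding Pvec_def by auto
      qed
      have ex: "\<exists>dg. dg \<in> F \<and> peval N (snd dg) (q(l:=s)) \<noteq> 0" for s
      proof -
        have "q(l:=s) \<notin> Y" using nY by blast
        then have "\<not> (\<forall>(d, f)\<in>F. peval N f (q(l:=s)) = 0)" using F(2) Pv[of s] by blast
        then show ?thesis by auto
      qed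
      define Z where "Z = {s. poly (P0 q) s = 0}"
      have finZ: "finite Z" unfolding Z_def using P0nz poly_roots_finite by blast
      obtain zs where zs: "set zs = Z" "distinct zs" using finite_distinct_list[OF finZ] by blast
      define n where "n = length zs"
      define G where "G = (\<lambda>k. SOME dg. dg \<in> F \<and> peval N (snd dg) (q(l:=zs!k)) \<noteq> 0)"
      have G: "G k \<in> F \<and> peval N (snd (G k)) (q(l:=zs!k)) \<noteq> 0" for k
        unfolding G_def by (rule someI_ex[OF ex])
      have v: "valid n G" unfolding valid_def using G by blast
      define Qz where "Qz = (\<lambda>z. \<Sum>k<n. monom (peval N (snd (G k)) (q(l:=z))) k)"
      have Qnz: "Qz z \<noteq> 0" if "z \<in> Z" for z
      proof -
        have "z \<in> set zs" using that zs(1) by simp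
        then obtain k0 where k0: "k0 < n" "zs ! k0 = z" unfolding n_def by (auto simp: in_set_conv_nth)
        have "coeff (Qz z) k0 = peval N (snd (G k0)) (q(l:=z))"
          unfolding Qz_def coeff_sum coeff_monom using k0 by (simp add: sum.delta)
        then show ?thesis using G[of k0] k0 by auto
      qed
      define B where "B = (\<Union>z\<in>Z. {t. poly (Qz z) t = 0})"
      have "finite B" unfolding B_def using finZ Qnz poly_roots_finite by (intro finite_UN_I) auto
      then obtain t where t: "t \<notin> B" using exists_not_in_finite by blast
      define U where "U = (\<lambda>k::nat. t ^ k)"
      have "R n G U q \<noteq> 0"
      proof -
        have "\<not> (\<exists>s. poly (P0 q) s = 0 \<and> poly (H n G U q) s = 0)"
        proof
          assume "\<exists>s. poly (P0 q) s = 0 \<and> poly (H n G U q) s = 0"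
          then obtain s where s: "poly (P0 q) s = 0" "poly (H n G U q) s = 0" by blast
          then have sZ: "s \<in> Z" unfolding Z_def by simp
          have "poly (H n G U q) s = (\<Sum>k<n. t ^ k * peval N (snd (G k)) (q(l:=s)))"
            unfolding H_def U_def using s(1) by (simp add: poly_sum poly_upoly[OF l])
          also have "\<dots> = poly (Qz s) t" unfolding Qz_def by (simp add: poly_sum poly_monom mult.commute)
          finally have "poly (Qz s) t = 0" using s(2) by simp
          then show False using t sZ unfolding B_def by blast
        qed
        then show ?thesis using resultant_root_iff[OF P0nz] resR[OF v] by metis
      qed
      then show False using all v by blast
    qed
  qed
  define Ps where "Ps = insert (\<lambda>q. q l) {R n G U | n G U. valid n G}"
  show ?thesis
  proof (rule zclosed_from_pfuns[where Ps = Ps])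
    show "(\<lambda>x. x(l := 0)) ` Y \<subseteq> Pvec N"
    proof
      fix y assume "y \<in> (\<lambda>x. x(l := 0)) ` Y"
      then obtain x where x: "x \<in> Y" "y = x(l:=0)" by blast
      then have "x \<in> Pvec N" using F(2) by blast
      moreover obtain i where "i \<le> N" "i \<noteq> l" "x i \<noteq> 0" using nz x(1) by blast
      ultimately show "y \<in> Pvec N" using x(2) unfolding Pvec_def by auto
    qed
  next
    fix y c assume "y \<in> (\<lambda>x. x(l := 0)) ` Y" "c \<noteq> (0::complex)"
    then obtain x where x: "x \<in> Y" "y = x(l:=0)" by blast
    have "(\<lambda>i. c * x i) \<in> Y" using zclosed_cone[OF Y x(1) \<open>c \<noteq> 0\<close>] .
    moreover have "(\<lambda>i. c * y i) = (\<lambda>i. c * x i)(l:=0)" using x(2) by auto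
    ultimately show "(\<lambda>i. c * y i) \<in> (\<lambda>x. x(l := 0)) ` Y" by blast
  next
    fix P assume "P \<in> Ps"
    then show "pfun N P" unfolding Ps_def using pfun_var[OF l] pfR by auto
  next
    fix q assume qP: "q \<in> Pvec N"
    have "q \<in> (\<lambda>x. x(l := 0)) ` Y \<longleftrightarrow> q l = 0 \<and> (\<exists>s. q(l:=s) \<in> Y)"
    proof
      assume "q \<in> (\<lambda>x. x(l := 0)) ` Y"
      then obtain x where x: "x \<in> Y" "q = x(l:=0)" by blast
      then have "q(l := x l) = x" by auto
      then show "q l = 0 \<and> (\<exists>s. q(l:=s) \<in> Y)" using x by (metis fun_upd_same)
    next
      assume "q l = 0 \<and> (\<exists>s. q(l:=s) \<in> Y)"
      then obtain s where "q l = 0" "q(l:=s) \<in> Y" by blast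
      moreover have "q = (q(l:=s))(l:=0)" using \<open>q l = 0\<close> by auto
      ultimately show "q \<in> (\<lambda>x. x(l := 0)) ` Y" by blast
    qed
    also have "\<dots> \<longleftrightarrow> (\<forall>P\<in>Ps. P q = 0)"
    proof
      assume "q l = 0 \<and> (\<exists>s. q(l:=s) \<in> Y)"
      then show "\<forall>P\<in>Ps. P q = 0" using key[OF qP] unfolding Ps_def by auto
    next
      assume A: "\<forall>P\<in>Ps. P q = 0"
      then have "q l = 0" unfolding Ps_def by auto
      moreover have "\<forall>n G U. valid n G \<longrightarrow> R n G U q = 0" using A unfolding Ps_def by blast
      ultimately show "q l = 0 \<and> (\<exists>s. q(l:=s) \<in> Y)" using key[OF qP] by blast
    qed
    finally show "q \<in> (\<lambda>x. x(l := 0)) ` Y \<longleftrightarrow> (\<forall>P\<in>Ps. P q = 0)" .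
  qed
qed




definition zo :: "nat set \<Rightarrow> (nat \<Rightarrow> complex) \<Rightarrow> nat \<Rightarrow> complex" where
  "zo R x = (\<lambda>i. if i \<in> R then 0 else x i)"

lemma two_elems:
  assumes "2 \<le> card A"
  shows "\<exists>a b. a \<in> A \<and> b \<in> A \<and> a \<noteq> b"
proof -
  have fin: "finite A" using assms card.infinite by fastforce
  have "A \<noteq> {}" using assms by auto
  then obtain a where a: "a \<in> A" by blast
  have "card (A - {a}) \<ge> 1" using assms a fin by (simp add: card_Diff_singleton)
  then have "A - {a} \<noteq> {}" by (metis card.empty not_one_le_zero)
  then obtain b where "b \<in> A - {a}" by blast
  then show ?thesis using a by blast
qed

definition noDelta :: "nat \<Rightarrow> (nat \<Rightarrow> complex) set \<Rightarrow> bool" where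
  "noDelta N C \<longleftrightarrow> (\<forall>x\<in>C. \<forall>i j. i \<le> N \<longrightarrow> j \<le> N \<longrightarrow> i \<noteq> j \<longrightarrow> x i = 0 \<longrightarrow> x j \<noteq> 0)"

lemma iter_closed:
  assumes C: "zclosed N C"
    and D0: "noDelta N C"
  shows "finite R \<Longrightarrow> R \<subseteq> {..N} \<Longrightarrow> card R + 2 \<le> N + 1 \<Longrightarrow> zclosed N (zo R ` C)"
proof (induction R rule: finite_induct)
  case empty
  have "zo {} ` C = C" by (auto simp: zo_def)
  then show ?case using C by simp
next
  case (insert l R)
  have cR: "card (insert l R) = card R + 1" using insert by simp
  have IH: "zclosed N (zo R ` C)" using insert cR by auto
  have l: "l \<le> N" using insert by auto
  have img: "zo (insert l R) ` C = (\<lambda>y. y(l:=0)) ` (zo R ` C)"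
  proof -
    have "zo (insert l R) x = (zo R x)(l:=0)" for x by (auto simp: zo_def)
    then show ?thesis by (simp add: image_image)
  qed
  have nz: "\<forall>y\<in>zo R ` C. \<exists>i\<le>N. i \<noteq> l \<and> y i \<noteq> 0"
  proof
    fix y assume "y \<in> zo R ` C"
    then obtain x where x: "x \<in> C" "y = zo R x" by blast
    define A where "A = {..N} - insert l R"
    have "card A = card {..N} - card (insert l R)"
      unfolding A_def using insert by (intro card_Diff_subset) auto
    then have "card A \<ge> 2" using insert cR by simp
    then obtain a b where ab: "a \<in> A" "b \<in> A" "a \<noteq> b" using two_elems by blast
    have "x a \<noteq> 0 \<or> x b \<noteq> 0" using D0 x(1) ab unfolding A_def noDelta_def by blast
    then obtain k where k: "k \<in> A" "x k \<noteq> 0" using ab by blast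
    then have "y k = x k" using x(2) unfolding zo_def A_def by auto
    then show "\<exists>i\<le>N. i \<noteq> l \<and> y i \<noteq> 0" using k unfolding A_def by auto
  qed
  show ?case using proj_closed[OF IH l nz] img by simp
qed

lemma finite_ratios:
  assumes C: "zclosed N C"
    and D0: "noDelta N C"
    and ij: "i \<le> N" "j \<le> N" "i \<noteq> j"
    and nzj: "\<And>x. x \<in> C \<Longrightarrow> x j \<noteq> 0"
  shows "finite ((\<lambda>x. x i / x j) ` C)"
proof -
  define R where "R = {..N} - {i, j}"
  have "card R = card {..N} - card {i, j}"
    unfolding R_def using ij by (intro card_Diff_subset) auto
  then have cR: "card R + 2 \<le> N + 1" using ij by simp
  have Y: "zclosed N (zo R ` C)" using iter_closed[OF C D0, of R] cR unfolding R_def by auto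
  obtain F where F: "\<forall>(d, f)\<in>F. is_hpoly N d f" "zo R ` C = {x \<in> Pvec N. \<forall>(d, f)\<in>F. peval N f x = 0}"
    using Y unfolding zclosed_def by blast
  have ei: "coord_point i \<in> Pvec N" using ij unfolding Pvec_def coord_point_def
    by (auto intro!: exI[of _ i])
  have "coord_point i \<notin> zo R ` C"
  proof
    assume "coord_point i \<in> zo R ` C"
    then obtain x where x: "x \<in> C" "coord_point i = zo R x" by blast
    then have "coord_point i j = x j" unfolding zo_def R_def by simp
    then show False using nzj[OF x(1)] ij(3) unfolding coord_point_def by simp
  qed
  then have "\<not> (\<forall>(d, f)\<in>F. peval N f (coord_point i) = 0)" using F(2) ei by blast
  then obtain d f where df: "(d, f) \<in> F" "peval N f (coord_point i) \<noteq> 0" by blast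
  have hf: "is_hpoly N d f" using F(1) df(1) by blast
  define Q where "Q = upoly N i f (coord_point j)"
  have "coeff Q d \<noteq> 0" unfolding Q_def coeff_upoly_top[OF hf ij(1)] using df(2) .
  then have Qnz: "Q \<noteq> 0" by auto
  have "(\<lambda>x. x i / x j) ` C \<subseteq> {r. poly Q r = 0}"
  proof
    fix r assume "r \<in> (\<lambda>x. x i / x j) ` C"
    then obtain x where x: "x \<in> C" "r = x i / x j" by blast
    have xj: "x j \<noteq> 0" using nzj x(1) by blast
    have xP: "x \<in> Pvec N" using x(1) zclosed_sub[OF C] by blast
    define w where "w = (coord_point j)(i := r)"
    have zw: "zo R x = (\<lambda>k. x j * w k)"
    proof
      fix k show "zo R x k = x j * w k"
      proof (cases "k \<le> N")
        case True
        then show ?thesis using xj x(2) ij(3) unfolding zo_def R_def w_def coord_point_def by auto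
      next
        case False
        then show ?thesis using xP ij unfolding zo_def R_def w_def coord_point_def Pvec_def by auto
      qed
    qed
    have "zo R x \<in> zo R ` C" using x(1) by blast
    then have "peval N f (zo R x) = 0" using F(2) df(1) by blast
    then have "x j ^ d * peval N f w = 0" unfolding zw peval_scale[OF hf] .
    then have "peval N f w = 0" using xj by simp
    then show "r \<in> {r. poly Q r = 0}" unfolding Q_def poly_upoly[OF ij(1)] w_def by simp
  qed
  then show ?thesis using poly_roots_finite[OF Qnz] finite_subset by blast
qed

lemma ratio_const:
  assumes irr: "zirred N C" and ij: "i \<le> N" "j \<le> N"
    and nzj: "\<And>x. x \<in> C \<Longrightarrow> x j \<noteq> 0"
    and fin: "finite ((\<lambda>x. x i / x j) ` C)"
  shows "\<exists>v. \<forall>x\<in>C. x i = v * x j"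
proof -
  have C: "zclosed N C" and ne: "C \<noteq> {}"
    and irr': "\<And>A B. zclosed N A \<Longrightarrow> zclosed N B \<Longrightarrow> C = A \<union> B \<Longrightarrow> C = A \<or> C = B"
    using irr unfolding zirred_def by blast+
  obtain Ps where Ps: "\<forall>P\<in>Ps. pfun N P" "\<forall>x. x \<in> C \<longleftrightarrow> x \<in> Pvec N \<and> (\<forall>P\<in>Ps. P x = 0)"
    using zclosed_pfuns[OF C] by blast
  define BW where "BW = (\<lambda>W. {x \<in> C. (\<Prod>w\<in>W. x i - w * x j) = 0})"
  have clW: "zclosed N (BW W)" if finW: "finite W" for W
  proof (rule zclosed_from_pfuns[where Ps = "insert (\<lambda>x. \<Prod>w\<in>W. x i - w * x j) Ps"])
    show "BW W \<subseteq> Pvec N" unfolding BW_def using zclosed_sub[OF C] by blast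
  next
    fix x c assume x: "x \<in> BW W" and c: "c \<noteq> (0::complex)"
    have "(\<lambda>i. c * x i) \<in> C" using zclosed_cone[OF C _ c] x unfolding BW_def by blast
    moreover have "(\<Prod>w\<in>W. c * x i - w * (c * x j)) = c ^ card W * (\<Prod>w\<in>W. x i - w * x j)"
    proof -
      have "(\<Prod>w\<in>W. c * x i - w * (c * x j)) = (\<Prod>w\<in>W. c * (x i - w * x j))"
        by (intro prod.cong) (auto simp: algebra_simps)
      also have "\<dots> = c ^ card W * (\<Prod>w\<in>W. x i - w * x j)" by (simp add: prod.distrib)
      finally show ?thesis .
    qed
    ultimately show "(\<lambda>i. c * x i) \<in> BW W" using x unfolding BW_def by simp
  next
    fix P assume "P \<in> insert (\<lambda>x. \<Prod>w\<in>W. x i - w * x j) Ps"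
    then show "pfun N P" using Ps(1) finW ij
      by (auto intro!: pfun_prod pfun_diff pfun_mult pfun_var pfun_const)
  next
    fix x assume "x \<in> Pvec N"
    then show "x \<in> BW W \<longleftrightarrow> (\<forall>P\<in>insert (\<lambda>x. \<Prod>w\<in>W. x i - w * x j) Ps. P x = 0)"
      unfolding BW_def using Ps(2) by auto
  qed
  have main: "finite W \<Longrightarrow> C = BW W \<Longrightarrow> \<exists>v. \<forall>x\<in>C. x i = v * x j" for W
  proof (induction W rule: finite_induct)
    case empty
    then show ?case using ne unfolding BW_def by simp
  next
    case (insert w W)
    have "BW (insert w W) = BW {w} \<union> BW W" unfolding BW_def using insert(1,2) by auto
    then have "C = BW {w} \<or> C = BW W" using irr' clW insert by (metis finite.emptyI finite.insertI)
    then show ?case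
    proof
      assume "C = BW {w}"
      then have "\<forall>x\<in>C. x i = w * x j" unfolding BW_def by auto
      then show ?thesis by blast
    next
      assume "C = BW W" then show ?thesis using insert.IH by blast
    qed
  qed
  have eqC: "C = BW ((\<lambda>x. x i / x j) ` C)"
  proof (intro equalityI subsetI)
    fix x assume x: "x \<in> C"
    have "x i - (x i / x j) * x j = 0" using nzj[OF x] by simp
    moreover have "x i / x j \<in> (\<lambda>x. x i / x j) ` C" using x by blast
    ultimately have "\<exists>w\<in>(\<lambda>x. x i / x j) ` C. x i - w * x j = 0" by blast
    then have "(\<Prod>w\<in>(\<lambda>x. x i / x j) ` C. x i - w * x j) = 0"
      using prod_zero_iff[OF fin] by blast
    then show "x \<in> BW ((\<lambda>x. x i / x j) ` C)" using x unfolding BW_def by blast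
  qed (auto simp: BW_def)
  show ?thesis by (rule main[OF fin eqC])
qed

lemma curve_meets:
  assumes cur: "irred_curve N C" and dis: "C \<inter> Delta N = {}" and j: "j \<le> N"
  shows "\<exists>x\<in>C. x j = 0"
proof (rule ccontr)
  assume "\<not> (\<exists>x\<in>C. x j = 0)"
  then have nzj: "\<And>x. x \<in> C \<Longrightarrow> x j \<noteq> 0" by blast
  have irr: "zirred N C" using cur unfolding irred_curve_def by blast
  have C: "zclosed N C" using irr unfolding zirred_def by blast
  have CP: "C \<subseteq> Pvec N" using zclosed_sub[OF C] .
  have D0: "noDelta N C" unfolding noDelta_def
  proof (intro ballI allI impI notI)
    fix x i k assume H: "x \<in> C" "i \<le> N" "k \<le> N" "i \<noteq> k" "x i = 0" "x k = 0"
    then have "x \<in> Delta N" using CP unfolding Delta_def by blast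
    then show False using dis H(1) by blast
  qed
  have "\<forall>i. \<exists>v. i \<le> N \<longrightarrow> (\<forall>x\<in>C. x i = v * x j)"
  proof
    fix i show "\<exists>v. i \<le> N \<longrightarrow> (\<forall>x\<in>C. x i = v * x j)"
    proof (cases "i \<le> N \<and> i \<noteq> j")
      case True
      then have "finite ((\<lambda>x. x i / x j) ` C)" using C D0 j nzj by (intro finite_ratios) auto
      then have "\<exists>v. \<forall>x\<in>C. x i = v * x j" using irr j nzj True by (intro ratio_const) auto
      then show ?thesis by blast
    next
      case False
      then show ?thesis by (intro exI[of _ 1]) auto
    qed
  qed
  then obtain v where v: "\<And>i x. i \<le> N \<Longrightarrow> x \<in> C \<Longrightarrow> x i = v i * x j" by metis
  obtain Z0 where Z0: "zirred N Z0" "Z0 \<subset> C" using cur unfolding irred_curve_def by blast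
  have Z0c: "zclosed N Z0" and "Z0 \<noteq> {}" using Z0(1) unfolding zirred_def by blast+
  then obtain z where z: "z \<in> Z0" by blast
  have zC: "z \<in> C" using z Z0(2) by blast
  have "C \<subseteq> Z0"
  proof
    fix x assume x: "x \<in> C"
    have zj: "z j \<noteq> 0" using nzj zC by blast
    have xj: "x j \<noteq> 0" using nzj x by blast
    have "x = (\<lambda>k. (x j / z j) * z k)"
    proof
      fix k show "x k = (x j / z j) * z k"
      proof (cases "k \<le> N")
        case True
        then show ?thesis using v[OF True x] v[OF True zC] zj by (simp add: field_simps)
      next
        case False
        have "x \<in> Pvec N" "z \<in> Pvec N" using x zC CP by blast+
        then have "x k = 0" "z k = 0" using False unfolding Pvec_def by auto
        then show ?thesis by simp
      qed
    qed
    moreover have "(\<lambda>k. (x j / z j) * z k) \<in> Z0" using zclosed_cone[OF Z0c z, of "x j / z j"] zj xj by simp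
    ultimately show "x \<in> Z0" by simp
  qed
  then show False using Z0(2) by blast
qed




lemma hprod_zero_iff: "hprod_list ps i = 0 \<longleftrightarrow> (\<exists>p\<in>set ps. p i = 0)"
  unfolding hprod_list_def by (force simp: prod_list_zero_iff)

theorem mainTheorem12:
  fixes N :: nat and C :: "(nat \<Rightarrow> complex) set"
  assumes "N \<ge> 2"
    and "irred_curve N C"
    and "C \<inter> Delta N = {}"
  shows "\<forall>k\<le>N. Hrk N C (coord_point k) = enat N"
proof (intro allI impI)
  fix k assume k: "k \<le> N"
  have irr: "zirred N C" using assms(2) unfolding irred_curve_def by blast
  have Cc: "zclosed N C" using irr unfolding zirred_def by blast
  have CP: "C \<subseteq> Pvec N" using zclosed_sub[OF Cc] .
  have nd: "x i = 0 \<Longrightarrow> x j \<noteq> 0" if "x \<in> C" "i \<le> N" "j \<le> N" "i \<noteq> j" for x i j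
  proof
    assume "x i = 0" "x j = 0"
    then have "x \<in> Delta N" using that CP unfolding Delta_def by blast
    then show False using assms(3) that(1) by blast
  qed
  have "\<forall>j. \<exists>p. j \<le> N \<longrightarrow> p \<in> C \<and> p j = 0"
    using curve_meets[OF assms(2,3)] by blast
  then obtain pt where pt: "\<And>j. j \<le> N \<Longrightarrow> pt j \<in> C \<and> pt j j = 0" by metis
  define js where "js = filter (\<lambda>j. j \<noteq> k) [0..<Suc N]"
  have setjs: "set js = {..N} - {k}" unfolding js_def by auto
  have "distinct js" unfolding js_def by simp
  then have "length js = card (set js)" by (simp add: distinct_card)
  also have "\<dots> = N" unfolding setjs using k by (simp add: card_Diff_singleton)
  finally have lenjs: "length js = N" .
  define ps where "ps = map pt js"
  have hN: "hrep N C (coord_point k) N"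
  proof -
    have psC: "set ps \<subseteq> C" unfolding ps_def using pt setjs by auto
    define c where "c = hprod_list ps k"
    have c: "c \<noteq> 0"
    proof -
      have "p k \<noteq> 0" if pin: "p \<in> set ps" for p
      proof -
        obtain j where j: "j \<in> set js" "p = pt j" using pin unfolding ps_def by auto
        then have "j \<le> N" "j \<noteq> k" using setjs by auto
        then show ?thesis using nd[of "pt j" j k] pt[of j] k j(2) by auto
      qed
      then show ?thesis unfolding c_def using hprod_zero_iff by blast
    qed
    have hp: "hprod_list ps = (\<lambda>i. c * coord_point k i)"
    proof
      fix i show "hprod_list ps i = c * coord_point k i"
      proof (cases "i = k")
        case True then show ?thesis unfolding c_def coord_point_def by simp
      next
        case False
        have "\<exists>p\<in>set ps. p i = 0"
        proof (cases "i \<le> N")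
          case True
          then have "i \<in> set js" using setjs False by auto
          then show ?thesis using pt[OF True] unfolding ps_def by auto
        next
          case nle: False
          have "js \<noteq> []" using lenjs assms(1) by auto
          then obtain j where j: "j \<in> set js" by (cases js) auto
          then have "pt j \<in> C" using pt setjs by auto
          then have "pt j i = 0" using CP nle unfolding Pvec_def by auto
          then show ?thesis using j unfolding ps_def by auto
        qed
        then show ?thesis using False hprod_zero_iff unfolding coord_point_def by auto
      qed
    qed
    have "coord_point k \<in> Pvec N" using k unfolding Pvec_def coord_point_def
      by (auto intro!: exI[of _ k])
    then have "hprod_list ps \<in> Pvec N" unfolding hp using Pvec_scale c by blast
    moreover have "proj_eq (coord_point k) (hprod_list ps)"
      unfolding proj_eq_def hp using c by (intro exI[of _ "1 / c"]) auto
    moreover have "length ps = N" unfolding ps_def using lenjs by simp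
    ultimately show ?thesis unfolding hrep_def using psC assms(1) by auto
  qed
  have lb: "N \<le> m" if hm: "hrep N C (coord_point k) m" for m
  proof -
    obtain ps where ps: "length ps = m" "set ps \<subseteq> C" "hprod_list ps \<in> Pvec N"
      "proj_eq (coord_point k) (hprod_list ps)" using hm unfolding hrep_def by blast
    obtain c where c: "c \<noteq> 0" "coord_point k = (\<lambda>i. c * hprod_list ps i)"
      using ps(4) unfolding proj_eq_def by blast
    have ex: "\<exists>t<m. (ps ! t) i = 0" if i: "i \<in> {..N} - {k}" for i
    proof -
      have "c * hprod_list ps i = 0" using c(2) i unfolding coord_point_def by (metis DiffE singletonI)
      then have "hprod_list ps i = 0" using c(1) by simp
      then obtain p where p: "p \<in> set ps" "p i = 0" using hprod_zero_iff by blast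
      then obtain t where "t < length ps" "ps ! t = p" by (auto simp: in_set_conv_nth)
      then show ?thesis using p ps(1) by blast
    qed
    then obtain f where f: "\<And>i. i \<in> {..N} - {k} \<Longrightarrow> f i < m \<and> (ps ! f i) i = 0" by metis
    have "inj_on f ({..N} - {k})"
    proof (rule inj_onI)
      fix i i' assume ii: "i \<in> {..N} - {k}" "i' \<in> {..N} - {k}" "f i = f i'"
      show "i = i'"
      proof (rule ccontr)
        assume ne: "i \<noteq> i'"
        have "ps ! f i \<in> C" using f[OF ii(1)] ps(1,2) by auto
        moreover have "(ps ! f i) i = 0" using f[OF ii(1)] by blast
        moreover have "(ps ! f i) i' = 0" using f[OF ii(2)] ii(3) by simp
        ultimately show False using nd[of "ps ! f i" i i'] ii ne by auto
      qed
    qed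
    moreover have "f ` ({..N} - {k}) \<subseteq> {..<m}" using f by auto
    ultimately have "card ({..N} - {k}) \<le> card {..<m}" by (intro card_inj_on_le) auto
    then show ?thesis using k by (simp add: card_Diff_singleton)
  qed
  have "(LEAST m. hrep N C (coord_point k) m) = N"
    by (rule Least_equality) (use hN lb in auto)
  then show "Hrk N C (coord_point k) = enat N" unfolding Hrk_def using hN by auto
qed


end
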